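(* Let $R:\mathbb{T}^2\to\mathbb{T}^2$ be a linear involution of the torus $\mathbb{T}^2=\mathbb{R}^2/\mathbb{Z}^2$, i.e. $R$ is induced by an integer matrix $A$ with $\det A=\pm1$ and $R\circ R=\mathrm{Id}$, and assume $R\neq \pm\,\mathrm{Id}$. Then there exists a linear Anosov diffeomorphism $f$ of $\mathbb{T}^2$ which is $R$-reversible, i.e. $R\circ f=f^{-1}\circ R$.
   Context: A linear diffeomorphism of $\mathbb{T}^2$ is one induced (via the projection $\mathbb{R}^2\to\mathbb{R}^2/\mathbb{Z}^2$) by a $2\times 2$ matrix with integer entries and determinant $\pm1$; such maps preserve the normalized area. A linear Anosov diffeomorphism is one induced by such a matrix $L$ having no eigenvalue on the unit circle. A diffeomorphism $R$ is an involution if $R\circ R=\mathrm{Id}$, and $f$ is $R$-reversible if $R\circ f=f^{-1}\circ R$. *)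

theory Defs
  imports "HOL-Analysis.Analysis"
begin

text \<open>Points of the torus R^2/Z^2 are represented by points of R^2; two points
  represent the same torus point iff their difference lies in Z^2.\<close>
definition torus_eq :: "real^2 \<Rightarrow> real^2 \<Rightarrow> bool" where
  "torus_eq x y \<longleftrightarrow> (\<forall>i. x$i - y$i \<in> \<int>)"

definition lin_lift :: "int^2^2 \<Rightarrow> real^2 \<Rightarrow> real^2" where
  "lin_lift M x = (\<chi> i j. (of_int (M$i$j) :: real)) *v x"

definition int_mat_eigenvalue :: "int^2^2 \<Rightarrow> complex \<Rightarrow> bool" where
  "int_mat_eigenvalue M \<mu> \<longleftrightarrow>
     (\<exists>v::complex^2. v \<noteq> 0 \<and> (\<chi> i j. (of_int (M$i$j) :: complex)) *v v = \<mu> *s v)"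

definition linear_anosov :: "int^2^2 \<Rightarrow> bool" where
  "linear_anosov L \<longleftrightarrow> (det L = 1 \<or> det L = -1) \<and>
     (\<forall>\<mu>. cmod \<mu> = 1 \<longrightarrow> \<not> int_mat_eigenvalue L \<mu>)"

end

theory Submission
  imports Defs
begin

definition mk2 :: "int \<Rightarrow> int \<Rightarrow> int \<Rightarrow> int \<Rightarrow> int^2^2" where
  "mk2 a b c d = (\<chi> i j. if i = 1 then (if j = 1 then a else b) else (if j = 1 then c else d))"

lemma mk2_nth [simp]:
  "mk2 a b c d $ 1 $ 1 = a" "mk2 a b c d $ 1 $ 2 = b"
  "mk2 a b c d $ 2 $ 1 = c" "mk2 a b c d $ 2 $ 2 = d"
  by (simp_all add: mk2_def)

lemma mat_eq2: "(M::'a^2^2) = N \<longleftrightarrow> M$1$1 = N$1$1 \<and> M$1$2 = N$1$2 \<and> M$2$1 = N$2$1 \<and> M$2$2 = N$2$2"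
  by (auto simp: vec_eq_iff forall_2)

lemma mult_nth2 [simp]:
  "((M::'a::semiring_1^2^2) ** N) $ i $ j = M$i$1 * N$1$j + M$i$2 * N$2$j"
  by (simp add: matrix_matrix_mult_def sum_2)

lemma lin_lift_nth:
  "lin_lift M x $ 1 = of_int (M$1$1) * x$1 + of_int (M$1$2) * x$2"
  "lin_lift M x $ 2 = of_int (M$2$1) * x$1 + of_int (M$2$2) * x$2"
  by (simp_all add: lin_lift_def matrix_vector_mult_def sum_2)

lemma lin_lift_comp: "lin_lift M (lin_lift N x) = lin_lift (M ** N) x"
  by (simp add: vec_eq_iff forall_2 lin_lift_nth algebra_simps)

lemma int_coeff_zero:
  fixes d :: int
  assumes "\<forall>t::real. of_int d * t \<in> \<int>"
  shows "d = 0"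
proof (rule ccontr)
  assume "d \<noteq> 0"
  define t where "t = 1 / (2 * (real_of_int \<bar>d\<bar> + 1))"
  have "of_int d * t \<in> \<int>" using assms by blast
  then obtain k where k: "of_int d * t = of_int k" by (auto elim: Ints_cases)
  have pos: "2 * (real_of_int \<bar>d\<bar> + 1) > 0" by simp
  have "\<bar>of_int d * t\<bar> < 1"
    using pos by (simp add: t_def abs_mult field_simps)
  then have "\<bar>real_of_int k\<bar> < 1" using k by simp
  then have "\<bar>k\<bar> < 1" by (metis of_int_abs of_int_less_1_iff)
  then have "k = 0" by simp
  then have "of_int d * t = 0" using k by simp
  moreover have "t \<noteq> 0" using pos by (simp add: t_def)
  ultimately show False using \<open>d \<noteq> 0\<close> by simp
qed

lemma no_unit_eig:
  fixes M :: "int^2^2"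
  assumes "det M = 1" and "\<bar>M$1$1 + M$2$2\<bar> > 2" and "cmod \<mu> = 1"
  shows "\<not> int_mat_eigenvalue M \<mu>"
proof
  assume "int_mat_eigenvalue M \<mu>"
  then obtain v :: "complex^2" where v0: "v \<noteq> 0"
    and ev: "(\<chi> i j. (of_int (M$i$j) :: complex)) *v v = \<mu> *s v"
    unfolding int_mat_eigenvalue_def by blast
  define a where "a = (of_int (M$1$1) :: complex)"
  define b where "b = (of_int (M$1$2) :: complex)"
  define c where "c = (of_int (M$2$1) :: complex)"
  define d where "d = (of_int (M$2$2) :: complex)"
  have e1: "a * v$1 + b * v$2 = \<mu> * v$1"
    using arg_cong[OF ev, of "\<lambda>w. w$1"] by (simp add: a_def b_def matrix_vector_mult_def sum_2)
  have e2: "c * v$1 + d * v$2 = \<mu> * v$2"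
    using arg_cong[OF ev, of "\<lambda>w. w$2"] by (simp add: c_def d_def matrix_vector_mult_def sum_2)
  define p where "p = (a - \<mu>) * (d - \<mu>) - b * c"
  have "p * v$1 = (d - \<mu>) * (a * v$1 + b * v$2 - \<mu> * v$1) - b * (c * v$1 + d * v$2 - \<mu> * v$2)"
    by (simp add: p_def algebra_simps)
  then have p1: "p * v$1 = 0" using e1 e2 by simp
  have "p * v$2 = (a - \<mu>) * (c * v$1 + d * v$2 - \<mu> * v$2) - c * (a * v$1 + b * v$2 - \<mu> * v$1)"
    by (simp add: p_def algebra_simps)
  then have p2: "p * v$2 = 0" using e1 e2 by simp
  have "v$1 \<noteq> 0 \<or> v$2 \<noteq> 0" using v0 by (auto simp: vec_eq_iff forall_2)
  then have p0: "p = 0" using p1 p2 by auto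
  have dd: "a * d - b * c = 1"
    using assms(1) by (simp add: det_2 a_def b_def c_def d_def flip: of_int_mult of_int_diff)
  define t where "t = a + d"
  have q: "\<mu> * \<mu> - t * \<mu> + 1 = 0"
    using p0 dd unfolding p_def t_def by (simp add: algebra_simps)
  have cm: "cnj \<mu> * \<mu> = 1"
    using assms(3) by (metis complex_norm_square mult.commute of_real_1 power_one)
  have "cnj \<mu> * (\<mu> * \<mu> - t * \<mu> + 1) = 0" using q by simp
  then have "\<mu> - t + cnj \<mu> = 0"
    using cm by (simp add: algebra_simps)
  then have "t = \<mu> + cnj \<mu>" by (simp add: algebra_simps)
  then have "t = of_real (2 * Re \<mu>)" by (simp add: complex_add_cnj)
  moreover have "t = of_real (of_int (M$1$1 + M$2$2))" by (simp add: t_def a_def d_def)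
  ultimately have "real_of_int (M$1$1 + M$2$2) = 2 * Re \<mu>" by (metis of_real_eq_iff)
  moreover have "\<bar>Re \<mu>\<bar> \<le> 1" using abs_Re_le_cmod[of \<mu>] assms(3) by simp
  ultimately have "\<bar>M$1$1 + M$2$2\<bar> \<le> 2" by linarith
  then show False using assms(2) by simp
qed

lemma choose_aux:
  fixes a c :: int
  assumes "c \<noteq> 0"
  shows "\<bar>2 * a + c * (5 * c * (if a \<ge> 0 then 1 else -1))\<bar> > 2"
proof -
  have "0 < c * c" using assms by (auto simp: zero_less_mult_iff linorder_neq_iff)
  then have cc: "c * c \<ge> 1" by linarith
  have e: "c * (5 * c * (if a \<ge> 0 then 1 else -1)) = (if a \<ge> 0 then 5 * (c * c) else - 5 * (c * c))"
    by (simp add: algebra_simps)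
  show ?thesis unfolding e using cc by (cases "a \<ge> 0") (simp_all add: abs_if)
qed

lemma choose_S:
  fixes a b c :: int
  assumes "a * a + b * c = 1"
  shows "\<exists>p q r. p * p + q * r = 1 \<and> \<bar>2 * a * p + b * r + c * q\<bar> > 2"
proof -
  define s :: int where "s = (if a \<ge> 0 then 1 else -1)"
  show ?thesis
  proof (cases "c = 0")
    case False
    have "\<bar>2 * a * 1 + b * 0 + c * (5 * c * s)\<bar> > 2"
      using choose_aux[OF False, of a] by (simp add: s_def)
    moreover have "1 * 1 + (5 * c * s) * 0 = (1::int)" by simp
    ultimately show ?thesis by blast
  next
    case c0: True
    show ?thesis
    proof (cases "b = 0")
      case False
      have "\<bar>2 * a * 1 + b * (5 * b * s) + c * 0\<bar> > 2"
        using choose_aux[OF False, of a] by (simp add: s_def)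
      moreover have "1 * 1 + 0 * (5 * b * s) = (1::int)" by simp
      ultimately show ?thesis by blast
    next
      case True
      then have "a * a = 1" using assms c0 by simp
      then have "a = 1 \<or> a = -1" by (metis square_eq_1_iff)
      then have "\<bar>2 * a * 2 + b * (-3) + c * 1\<bar> > 2" using True c0 by auto
      moreover have "2 * 2 + 1 * (-3) = (1::int)" by simp
      ultimately show ?thesis by blast
    qed
  qed
qed

theorem proposition1:
  fixes A :: "int^2^2"
  assumes "det A = 1 \<or> det A = -1"
    and "\<forall>x. torus_eq (lin_lift A (lin_lift A x)) x"
    and "\<not> (\<forall>x. torus_eq (lin_lift A x) x)"
    and "\<not> (\<forall>x. torus_eq (lin_lift A x) (- x))"
  shows "\<exists>L Linv :: int^2^2. linear_anosov L \<and> L ** Linv = mat 1 \<and> Linv ** L = mat 1 \<and>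
           (\<forall>x. torus_eq (lin_lift A (lin_lift L x)) (lin_lift Linv (lin_lift A x)))"
proof -
  define a where "a = A$1$1"
  define b where "b = A$1$2"
  define c where "c = A$2$1"
  define d where "d = A$2$2"
  define A2 where "A2 = A ** A"
  have tz: "\<And>x. lin_lift A (lin_lift A x) $ i - x $ i \<in> \<int>" for i
    using assms(2) by (simp add: torus_eq_def)
  have key: "\<And>i j. A2$i$j - (if i = j then 1 else 0) = 0"
  proof -
    fix i j :: 2
    show "A2$i$j - (if i = j then 1 else 0) = 0"
    proof (rule int_coeff_zero, rule allI)
      fix t :: real
      define x :: "real^2" where "x = (\<chi> k. if k = j then t else 0)"
      have "lin_lift A (lin_lift A x) $ i - x $ i \<in> \<int>" by (rule tz)
      moreover have "lin_lift A (lin_lift A x) $ i - x $ i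
          = of_int (A2$i$j - (if i = j then 1 else 0)) * t"
        unfolding lin_lift_comp A2_def[symmetric]
        by (cases "i = j") (simp_all add: lin_lift_def matrix_vector_mult_def x_def if_distrib mult.commute right_diff_distrib cong: if_cong)
      ultimately show "of_int (A2$i$j - (if i = j then 1 else 0)) * t \<in> \<int>" by simp
    qed
  qed
  have k11: "a*a + b*c = 1" using key[of 1 1] by (simp add: A2_def a_def b_def c_def)
  have k12: "a*b + b*d = 0" using key[of 1 2] by (simp add: A2_def a_def b_def d_def)
  have k21: "c*a + d*c = 0" using key[of 2 1] by (simp add: A2_def a_def c_def d_def)
  have k22: "c*b + d*d = 1" using key[of 2 2] by (simp add: A2_def b_def c_def d_def)
  have notI: "\<not> (a = 1 \<and> b = 0 \<and> c = 0 \<and> d = 1)"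
  proof
    assume h: "a = 1 \<and> b = 0 \<and> c = 0 \<and> d = 1"
    have "\<forall>x. torus_eq (lin_lift A x) x"
      using h by (simp add: torus_eq_def forall_2 lin_lift_nth a_def b_def c_def d_def)
    then show False using assms(3) by simp
  qed
  have notmI: "\<not> (a = -1 \<and> b = 0 \<and> c = 0 \<and> d = -1)"
  proof
    assume h: "a = -1 \<and> b = 0 \<and> c = 0 \<and> d = -1"
    have "\<forall>x. torus_eq (lin_lift A x) (-x)"
      using h by (simp add: torus_eq_def forall_2 lin_lift_nth a_def b_def c_def d_def)
    then show False using assms(4) by simp
  qed
  have dma: "d = -a"
  proof (rule ccontr)
    assume "d \<noteq> -a"
    then have "a + d \<noteq> 0" by simp
    then have "b = 0" "c = 0" using k12 k21 by (simp_all add: algebra_simps)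
      (metis distrib_left mult.commute mult_eq_0_iff, metis distrib_left mult.commute mult_eq_0_iff)
    then have "a*a = 1" "d*d = 1" using k11 k22 by simp_all
    then have "a = 1 \<or> a = -1" "d = 1 \<or> d = -1" by (metis square_eq_1_iff)+
    then show False using notI notmI \<open>b = 0\<close> \<open>c = 0\<close> \<open>a + d \<noteq> 0\<close> by auto
  qed
  obtain p q r where pqr: "p * p + q * r = 1" and tr: "\<bar>2 * a * p + b * r + c * q\<bar> > 2"
    using choose_S[OF k11] by blast
  define S where "S = mk2 p q r (-p)"
  define L where "L = A ** S"
  define Linv where "Linv = S ** A"
  have AA: "A ** A = mat 1"
    using k11 k12 k21 k22 by (simp add: mat_eq2 mat_def a_def b_def c_def d_def algebra_simps)
  have SS: "S ** S = mat 1"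
    using pqr by (simp add: mat_eq2 mat_def S_def algebra_simps)
  have 1: "L ** Linv = mat 1"
    unfolding L_def Linv_def by (simp add: matrix_mul_assoc SS AA flip: matrix_mul_assoc[of A S])
  have 2: "Linv ** L = mat 1"
    unfolding L_def Linv_def by (simp add: matrix_mul_assoc AA SS flip: matrix_mul_assoc[of S A])
  have 3: "A ** L = Linv ** A"
  proof -
    have "A ** L = S" unfolding L_def by (metis matrix_mul_assoc AA matrix_mul_lid)
    moreover have "Linv ** A = S" unfolding Linv_def by (metis matrix_mul_assoc AA matrix_mul_rid)
    ultimately show ?thesis by simp
  qed
  have "\<And>a b c p q r::int. (a * p + b * r) * (c * q + a * p) - (a * q - b * p) * (c * p - a * r) = (a*a+b*c)*(p*p+q*r)"
    by algebra
  have detL: "det L = 1"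
    using pqr k11 dma unfolding L_def S_def
    by (simp add: det_2 a_def[symmetric] b_def[symmetric] c_def[symmetric] d_def[symmetric])
       (metis (no_types) mult_1 \<open>\<And>a b c p q r::int. (a * p + b * r) * (c * q + a * p) - (a * q - b * p) * (c * p - a * r) = (a*a+b*c)*(p*p+q*r)\<close>)
  have trL: "\<bar>L$1$1 + L$2$2\<bar> > 2"
    using tr dma unfolding L_def S_def
    by (simp add: a_def[symmetric] b_def[symmetric] c_def[symmetric] d_def[symmetric] algebra_simps)
  have an: "linear_anosov L"
    unfolding linear_anosov_def using detL trL no_unit_eig by blast
  have 4: "\<forall>x. torus_eq (lin_lift A (lin_lift L x)) (lin_lift Linv (lin_lift A x))"
    by (simp add: lin_lift_comp 3 torus_eq_def)
  show ?thesis using an 1 2 4 by blast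
qed

end
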